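(* Let $m\ge2$, $w=2^m$, $\gamma\in(0,\infty)^w$ and $\vartheta\sim\mathrm{mBeta}(\gamma)$ with mean vector $\mu=\mathbb{E}(\vartheta)\in(0,1)^m$. For $j\ne j'$ let $\rho_{jj'}$ be the correlation coefficient of $\vartheta_j$ and $\vartheta_{j'}$, and let $\psi_j=\sqrt{\mu_j/(1-\mu_j)}$. Then $$\max\!\Big(-\frac{1}{\psi_j\psi_{j'}},\ -\psi_j\psi_{j'}\Big)\ \le\ \rho_{jj'}\ \le\ \min\!\Big(\frac{\psi_j}{\psi_{j'}},\ \frac{\psi_{j'}}{\psi_j}\Big).$$
   Context: $H=H(m)\in\{0,1\}^{m\times w}$ is the matrix whose $j$-th column is the length-$m$ binary representation of $j-1$ (most significant bit in the first row). $\vartheta\sim\mathrm{mBeta}(\gamma)$ means $\vartheta=Hp$ where $p$ follows the Dirichlet distribution $\mathrm{Dir}(\gamma)$ on the open simplex in $\mathbb{R}^w$. *)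

theory Defs
  imports "HOL-Analysis.Analysis"
begin

text \<open>Binary matrix H(m): row j (0-based, j < m), column k (0-based, k < 2^m);
  column k is the m-bit binary representation of k, most significant bit in row 0.\<close>
definition Hmat :: "nat \<Rightarrow> nat \<Rightarrow> nat \<Rightarrow> real" where
  "Hmat m j k = real ((k div 2 ^ (m - 1 - j)) mod 2)"

text \<open>Dirichlet(gamma) on the open simplex in R^w, realised on its first w-1
  coordinates x_0..x_{w-2}; the last coordinate is 1 - sum of the others.\<close>
definition open_simplex_coords :: "nat \<Rightarrow> (nat \<Rightarrow> real) set" where
  "open_simplex_coords w = {x. (\<forall>i<w-1. 0 < x i) \<and> (\<Sum>i<w-1. x i) < 1}"

definition dirichlet_density :: "nat \<Rightarrow> (nat \<Rightarrow> real) \<Rightarrow> (nat \<Rightarrow> real) \<Rightarrow> real" where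
  "dirichlet_density w \<gamma> x =
     (if x \<in> open_simplex_coords w then
        Gamma (\<Sum>i<w. \<gamma> i) / (\<Prod>i<w. Gamma (\<gamma> i))
        * (\<Prod>i<w-1. x i powr (\<gamma> i - 1))
        * (1 - (\<Sum>i<w-1. x i)) powr (\<gamma> (w-1) - 1)
      else 0)"

definition dirichlet :: "nat \<Rightarrow> (nat \<Rightarrow> real) \<Rightarrow> (nat \<Rightarrow> real) measure" where
  "dirichlet w \<gamma> = density (PiM {..<w-1} (\<lambda>_. lborel))
                        (\<lambda>x. ennreal (dirichlet_density w \<gamma> x))"

definition pvec :: "nat \<Rightarrow> (nat \<Rightarrow> real) \<Rightarrow> nat \<Rightarrow> real" where
  "pvec w x k = (if k < w - 1 then x k else 1 - (\<Sum>i<w-1. x i))"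

definition theta :: "nat \<Rightarrow> (nat \<Rightarrow> real) \<Rightarrow> nat \<Rightarrow> real" where
  "theta m x j = (\<Sum>k<2^m. Hmat m j k * pvec (2^m) x k)"

definition mbeta_mean :: "nat \<Rightarrow> (nat \<Rightarrow> real) \<Rightarrow> nat \<Rightarrow> real" where
  "mbeta_mean m \<gamma> j = (\<integral>x. theta m x j \<partial>(dirichlet (2^m) \<gamma>))"

definition mbeta_cov :: "nat \<Rightarrow> (nat \<Rightarrow> real) \<Rightarrow> nat \<Rightarrow> nat \<Rightarrow> real" where
  "mbeta_cov m \<gamma> j j' = (\<integral>x. (theta m x j - mbeta_mean m \<gamma> j) * (theta m x j' - mbeta_mean m \<gamma> j')
                          \<partial>(dirichlet (2^m) \<gamma>))"

definition mbeta_corr :: "nat \<Rightarrow> (nat \<Rightarrow> real) \<Rightarrow> nat \<Rightarrow> nat \<Rightarrow> real" where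
  "mbeta_corr m \<gamma> j j' = mbeta_cov m \<gamma> j j' / (sqrt (mbeta_cov m \<gamma> j j) * sqrt (mbeta_cov m \<gamma> j' j'))"

end

theory Submission
  imports Defs
begin

lemma beta_scaled:
  fixes a b t :: real
  assumes a: "a > 0" and b: "b > 0" and t: "t > 0"
  shows "(\<integral>\<^sup>+y. ennreal (indicator {0<..<t} y * y powr (a-1) * (t-y) powr (b-1)) \<partial>lborel)
         = ennreal (t powr (a+b-1) * Beta a b)"
proof -
  have hi: "((\<lambda>u. indicator {0<..<1} u * u powr (a-1) * (1-u) powr (b-1)) has_integral Beta a b) UNIV"
  proof -
    have "((\<lambda>u. u powr (a-1) * (1-u) powr (b-1)) has_integral Beta a b) {0<..<1}"
      using has_integral_Beta_real[OF a b] by (simp add: has_integral_Icc_iff_Ioo)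
    then have "((\<lambda>u. if u \<in> {0<..<1} then u powr (a-1) * (1-u) powr (b-1) else 0) has_integral Beta a b) UNIV"
        by (rule has_integral_restrict_UNIV[THEN iffD2])
    then show ?thesis
      by (rule has_integral_eq[rotated]) (auto simp: indicator_def)
  qed
  have base: "(\<integral>\<^sup>+u. ennreal (indicator {0<..<1} u * u powr (a-1) * (1-u) powr (b-1)) \<partial>lborel) = ennreal (Beta a b)"
    by (rule nn_integral_has_integral_lborel[OF _ _ hi]) (auto simp: indicator_def)
  have "(\<integral>\<^sup>+y. ennreal (indicator {0<..<t} y * y powr (a-1) * (t-y) powr (b-1)) \<partial>lborel)
      = ennreal \<bar>t\<bar> * (\<integral>\<^sup>+u. ennreal (indicator {0<..<t} (0 + t*u) * (0+t*u) powr (a-1) * (t-(0+t*u)) powr (b-1)) \<partial>lborel)"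
    using t by (intro nn_integral_real_affine) auto
  also have "(\<lambda>u. ennreal (indicator {0<..<t} (0 + t*u) * (0+t*u) powr (a-1) * (t-(0+t*u)) powr (b-1)))
     = (\<lambda>u. ennreal (t powr (a+b-2)) * ennreal (indicator {0<..<1} u * u powr (a-1) * (1-u) powr (b-1)))"
  proof
    fix u
    show "ennreal (indicator {0<..<t} (0 + t*u) * (0+t*u) powr (a-1) * (t-(0+t*u)) powr (b-1))
      = ennreal (t powr (a+b-2)) * ennreal (indicator {0<..<1} u * u powr (a-1) * (1-u) powr (b-1))"
    proof (cases "u \<in> {0<..<1}")
      case True
      have "t - t*u = t * (1-u)" by (simp add: algebra_simps)
      moreover have "t powr (a+b-2) = t powr (a-1) * t powr (b-1)"
        by (simp add: powr_add[symmetric])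
      ultimately show ?thesis using True t
        by (auto simp: indicator_def powr_mult ennreal_mult'[symmetric] mult_ac mult_pos_pos)
    next
      case False
      then have "t*u \<notin> {0<..<t}" using t
        by (auto simp: zero_less_mult_iff) 
      then have "indicator {0<..<t} (0+t*u) = (0::real)" by (simp add: indicator_def)
      moreover have "indicator {0<..<1} u = (0::real)" using False by (simp add: indicator_def)
      ultimately show ?thesis by simp
    qed
  qed
  also have "(\<integral>\<^sup>+u. ennreal (t powr (a+b-2)) * ennreal (indicator {0<..<1} u * u powr (a-1) * (1-u) powr (b-1)) \<partial>lborel)
     = ennreal (t powr (a+b-2)) * ennreal (Beta a b)"
    by (subst nn_integral_cmult) (auto simp: base)
  also have "ennreal \<bar>t\<bar> * (ennreal (t powr (a+b-2)) * ennreal (Beta a b)) = ennreal (t powr (a+b-1) * Beta a b)"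
  proof -
    have "Beta a b \<ge> 0" using a b by (simp add: Beta_def Gamma_real_pos less_imp_le)
    moreover have "t * t powr (a+b-2) = t powr (a+b-1)" using t
      by (simp add: powr_add[symmetric] powr_mult_base)
    ultimately show ?thesis using t by (simp add: ennreal_mult'[symmetric] ennreal_mult[symmetric] mult.assoc)
  qed
  finally show ?thesis .
qed

definition simplexS :: "nat \<Rightarrow> real \<Rightarrow> (nat \<Rightarrow> real) set" where
  "simplexS n s = {x. (\<forall>i\<in>{..<n}. 0 < x i) \<and> (\<Sum>i<n. x i) < s}"

definition Fd :: "nat \<Rightarrow> (nat \<Rightarrow> real) \<Rightarrow> real \<Rightarrow> (nat \<Rightarrow> real) \<Rightarrow> real" where
  "Fd n g s x = (if (\<forall>i\<in>{..<n}. 0 < x i) \<and> (\<Sum>i<n. x i) < s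
     then (\<Prod>i<n. x i powr (g i - 1)) * (s - (\<Sum>i<n. x i)) powr (g n - 1) else 0)"

lemma Fd_nonneg: "Fd n g s x \<ge> 0"
  unfolding Fd_def by (auto intro!: prod_nonneg mult_nonneg_nonneg)

lemma Fd_meas[measurable]: "(\<lambda>x. Fd n g s x) \<in> borel_measurable (PiM {..<n} (\<lambda>_. lborel))"
  unfolding Fd_def by measurable

lemma Fd_step:
  "Fd (Suc n) g s (x(n:=y)) =
     (if (\<forall>i\<in>{..<n}. 0 < x i) then (\<Prod>i<n. x i powr (g i - 1)) else 0) *
     (indicator {0<..<s - (\<Sum>i<n. x i)} y * y powr (g n - 1) * (s - (\<Sum>i<n. x i) - y) powr (g (Suc n) - 1))"
proof -
  have sx: "(\<Sum>i<Suc n. (x(n:=y)) i) = (\<Sum>i<n. x i) + y"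
    by (simp add: sum.lessThan_Suc)
  have px: "(\<Prod>i<Suc n. (x(n:=y)) i powr (g i - 1)) = (\<Prod>i<n. x i powr (g i - 1)) * y powr (g n - 1)"
    by (simp add: prod.lessThan_Suc)
  have cx: "(\<forall>i\<in>{..<Suc n}. 0 < (x(n:=y)) i) = ((\<forall>i\<in>{..<n}. 0 < x i) \<and> 0 < y)"
    by (auto simp: less_Suc_eq)
  show ?thesis
    unfolding Fd_def sx px cx
    by (auto simp: indicator_def algebra_simps)
qed

lemma dirichlet_integral:
  assumes "\<And>i. i \<le> n \<Longrightarrow> g i > 0" "s > 0"
  shows "(\<integral>\<^sup>+x. ennreal (Fd n g s x) \<partial>PiM {..<n} (\<lambda>_. lborel)) =
    ennreal (s powr ((\<Sum>i\<le>n. g i) - 1) * (\<Prod>i\<le>n. Gamma (g i)) / Gamma (\<Sum>i\<le>n. g i))"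
  using assms
proof (induction n arbitrary: g)
  case 0
  have "0 < g 0" using 0 by auto
  then have G0: "Gamma (g 0) \<noteq> (0::real)" using Gamma_real_pos[of "g 0"] by linarith
  then show ?case
    using 0 G0 by (simp add: PiM_empty Fd_def nn_integral_count_space_finite)
next
  case (Suc n)
  interpret product_sigma_finite "\<lambda>_. lborel" by standard
  define g' where "g' = g(n := g n + g (Suc n))"
  have g'pos: "\<And>i. i \<le> n \<Longrightarrow> g' i > 0" using Suc.prems
    by (auto simp: g'_def add_pos_pos)
  define B where "B = Beta (g n) (g (Suc n))"
  have Bpos: "B > 0" unfolding B_def Beta_def using Suc.prems
    by (auto intro!: divide_pos_pos mult_pos_pos Gamma_real_pos add_pos_pos)
  have "(\<integral>\<^sup>+x. ennreal (Fd (Suc n) g s x) \<partial>PiM {..<Suc n} (\<lambda>_. lborel))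
      = (\<integral>\<^sup>+x. ennreal (Fd (Suc n) g s x) \<partial>PiM (insert n {..<n}) (\<lambda>_. lborel))"
    by (simp add: lessThan_Suc)
  also have "\<dots> = (\<integral>\<^sup>+x. (\<integral>\<^sup>+y. ennreal (Fd (Suc n) g s (x(n:=y))) \<partial>lborel) \<partial>PiM {..<n} (\<lambda>_. lborel))"
  proof (rule product_nn_integral_insert)
    show "(\<lambda>x. ennreal (Fd (Suc n) g s x)) \<in> borel_measurable (PiM (insert n {..<n}) (\<lambda>_. lborel))"
      using Fd_meas[of "Suc n" g s] by (simp add: lessThan_Suc)
  qed auto
  also have "\<dots> = (\<integral>\<^sup>+x. ennreal B * ennreal (Fd n g' s x) \<partial>PiM {..<n} (\<lambda>_. lborel))"
  proof (rule nn_integral_cong)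
    fix x
    define Q where "Q = (if (\<forall>i\<in>{..<n}. 0 < x i) then (\<Prod>i<n. x i powr (g i - 1)) else 0)"
    define t where "t = s - (\<Sum>i<n. x i)"
    have Q0: "Q \<ge> 0" unfolding Q_def by (auto intro!: prod_nonneg)
    have "(\<integral>\<^sup>+y. ennreal (Fd (Suc n) g s (x(n:=y))) \<partial>lborel)
       = (\<integral>\<^sup>+y. ennreal Q * ennreal (indicator {0<..<t} y * y powr (g n - 1) * (t - y) powr (g (Suc n) - 1)) \<partial>lborel)"
    proof (intro nn_integral_cong)
      fix y
      have "Fd (Suc n) g s (x(n:=y)) = Q * (indicator {0<..<t} y * y powr (g n - 1) * (t - y) powr (g (Suc n) - 1))"
        unfolding Fd_step Q_def t_def by simp
      then show "ennreal (Fd (Suc n) g s (x(n:=y))) = ennreal Q * ennreal (indicator {0<..<t} y * y powr (g n - 1) * (t - y) powr (g (Suc n) - 1))"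
        using Q0 by (simp add: ennreal_mult')
    qed
    also have "\<dots> = ennreal Q * (\<integral>\<^sup>+y. ennreal (indicator {0<..<t} y * y powr (g n - 1) * (t - y) powr (g (Suc n) - 1)) \<partial>lborel)"
      by (rule nn_integral_cmult) measurable
    also have "(\<integral>\<^sup>+y. ennreal (indicator {0<..<t} y * y powr (g n - 1) * (t - y) powr (g (Suc n) - 1)) \<partial>lborel)
        = ennreal (if t > 0 then t powr (g n + g (Suc n) - 1) * B else 0)"
    proof (cases "t > 0")
      case True
      then show ?thesis unfolding B_def using Suc.prems by (simp add: beta_scaled)
    next
      case False
      then have "\<And>y. indicator {0<..<t} y = (0::real)" by (auto simp: indicator_def)
      then show ?thesis using False by simp
    qed
    also have "ennreal Q * ennreal (if t > 0 then t powr (g n + g (Suc n) - 1) * B else 0)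
        = ennreal B * ennreal (Fd n g' s x)"
    proof -
      have "(\<Prod>i<n. x i powr (g' i - 1)) = (\<Prod>i<n. x i powr (g i - 1))"
        by (rule prod.cong) (auto simp: g'_def)
      then have "Q * (if t > 0 then t powr (g n + g (Suc n) - 1) * B else 0) = B * Fd n g' s x"
        unfolding Q_def t_def Fd_def by (auto simp: g'_def)
      then show ?thesis using Q0 Bpos
        by (simp add: ennreal_mult'[symmetric] ennreal_mult[symmetric] less_imp_le)
    qed
    finally show "(\<integral>\<^sup>+y. ennreal (Fd (Suc n) g s (x(n:=y))) \<partial>lborel) = ennreal B * ennreal (Fd n g' s x)" .
  qed
  also have "\<dots> = ennreal B * (\<integral>\<^sup>+x. ennreal (Fd n g' s x) \<partial>PiM {..<n} (\<lambda>_. lborel))"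
    by (rule nn_integral_cmult) measurable
  also have "\<dots> = ennreal B * ennreal (s powr ((\<Sum>i\<le>n. g' i) - 1) * (\<Prod>i\<le>n. Gamma (g' i)) / Gamma (\<Sum>i\<le>n. g' i))"
    using Suc.IH[OF g'pos Suc.prems(2)] by simp
  also have "\<dots> = ennreal (s powr ((\<Sum>i\<le>Suc n. g i) - 1) * (\<Prod>i\<le>Suc n. Gamma (g i)) / Gamma (\<Sum>i\<le>Suc n. g i))"
  proof -
    have s1: "(\<Sum>i<n. g' i) = (\<Sum>i<n. g i)" by (rule sum.cong) (auto simp: g'_def)
    have p1: "(\<Prod>i<n. Gamma (g' i)) = (\<Prod>i<n. Gamma (g i))" by (rule prod.cong) (auto simp: g'_def)
    have S: "(\<Sum>i\<le>n. g' i) = (\<Sum>i\<le>Suc n. g i)"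
      unfolding atMost_Suc lessThan_Suc_atMost[symmetric] sum.lessThan_Suc s1
      using s1 by (simp add: g'_def sum.lessThan_Suc lessThan_Suc_atMost[symmetric])
    have gg: "Gamma (g n) * Gamma (g (Suc n)) = B * Gamma (g n + g (Suc n))"
    proof -
      have "g n + g (Suc n) > 0" using Suc.prems(1)[of n] Suc.prems(1)[of "Suc n"] by simp
      then have "g n + g (Suc n) \<notin> \<int>\<^sub>\<le>\<^sub>0" by (auto dest!: nonpos_Ints_nonpos)
      then show ?thesis unfolding B_def by (rule Gamma_Gamma_Beta)
    qed
    have P: "B * (\<Prod>i\<le>n. Gamma (g' i)) = (\<Prod>i\<le>Suc n. Gamma (g i))"
      using p1 gg by (simp add: g'_def prod.lessThan_Suc lessThan_Suc_atMost[symmetric])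
    have "B * (s powr ((\<Sum>i\<le>n. g' i) - 1) * (\<Prod>i\<le>n. Gamma (g' i)) / Gamma (\<Sum>i\<le>n. g' i))
       = s powr ((\<Sum>i\<le>Suc n. g i) - 1) * (\<Prod>i\<le>Suc n. Gamma (g i)) / Gamma (\<Sum>i\<le>Suc n. g i)"
      using S P by (simp add: mult_ac)
    moreover have "0 \<le> s powr ((\<Sum>i\<le>n. g' i) - 1) * (\<Prod>i\<le>n. Gamma (g' i)) / Gamma (\<Sum>i\<le>n. g' i)"
      using g'pos by (auto intro!: divide_nonneg_nonneg mult_nonneg_nonneg prod_nonneg less_imp_le[OF Gamma_real_pos] sum_pos)
    ultimately show ?thesis using Bpos by (simp add: ennreal_mult[symmetric])
  qed
  finally show ?case .
qed

definition bump :: "(nat \<Rightarrow> real) \<Rightarrow> nat \<Rightarrow> nat \<Rightarrow> real" where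
  "bump g k = (\<lambda>i. g i + (if i = k then 1 else 0))"

definition Zc :: "nat \<Rightarrow> (nat \<Rightarrow> real) \<Rightarrow> real" where
  "Zc n g = (\<Prod>i\<le>n. Gamma (g i)) / Gamma (\<Sum>i\<le>n. g i)"

lemma Zc_pos: assumes "\<And>i. i \<le> n \<Longrightarrow> g i > 0" shows "Zc n g > 0"
  unfolding Zc_def using assms
  by (intro divide_pos_pos prod_pos Gamma_real_pos sum_pos) auto

lemma Fd_int1:
  assumes "\<And>i. i \<le> n \<Longrightarrow> g i > 0"
  shows "(\<integral>\<^sup>+x. ennreal (Fd n g 1 x) \<partial>PiM {..<n} (\<lambda>_. lborel)) = ennreal (Zc n g)"
  using dirichlet_integral[of n g 1] assms by (simp add: Zc_def)

lemma bump_pos: "(\<And>i. i \<le> n \<Longrightarrow> g i > 0) \<Longrightarrow> i \<le> n \<Longrightarrow> bump g k i > 0"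
  unfolding bump_def by (simp add: add_pos_nonneg)

lemma Fd_bump:
  assumes "k \<le> n"
  shows "Fd n g 1 x * pvec (Suc n) x k = Fd n (bump g k) 1 x"
proof (cases "(\<forall>i\<in>{..<n}. 0 < x i) \<and> (\<Sum>i<n. x i) < 1")
  case False
  then show ?thesis unfolding Fd_def if_not_P[OF False] by simp
next
  case True
  then have xp: "\<And>i. i < n \<Longrightarrow> x i > 0" and sp: "1 - (\<Sum>i<n. x i) > 0" by auto
  show ?thesis
  proof (cases "k < n")
    case True
    have "(\<Prod>i<n. x i powr (bump g k i - 1)) = (\<Prod>i<n. x i powr (g i - 1) * (if i = k then x i else 1))"
    proof (rule prod.cong)
      fix i assume "i \<in> {..<n}"
      then have "x i > 0" using xp by auto
      then show "x i powr (bump g k i - 1) = x i powr (g i - 1) * (if i = k then x i else 1)"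
        using powr_add[of "x i" "g i - 1" 1] by (auto simp: bump_def)
    qed simp
    also have "\<dots> = (\<Prod>i<n. x i powr (g i - 1)) * x k"
      using True by (simp add: prod.distrib prod.delta)
    finally have P: "(\<Prod>i<n. x i powr (bump g k i - 1)) = (\<Prod>i<n. x i powr (g i - 1)) * x k" .
    have "bump g k n = g n" using True by (simp add: bump_def)
    then show ?thesis using \<open>(\<forall>i\<in>{..<n}. 0 < x i) \<and> (\<Sum>i<n. x i) < 1\<close> True P
      unfolding Fd_def pvec_def by simp
  next
    case False
    then have kn: "k = n" using assms by simp
    have P: "(\<Prod>i<n. x i powr (bump g k i - 1)) = (\<Prod>i<n. x i powr (g i - 1))"
      by (rule prod.cong) (auto simp: bump_def kn)
    have "(1 - (\<Sum>i<n. x i)) powr (bump g k n - 1) = (1 - (\<Sum>i<n. x i)) powr (g n - 1) * (1 - (\<Sum>i<n. x i))"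
      using sp powr_add[of "1 - (\<Sum>i<n. x i)" "g n - 1" 1] by (simp add: bump_def kn)
    then show ?thesis using \<open>(\<forall>i\<in>{..<n}. 0 < x i) \<and> (\<Sum>i<n. x i) < 1\<close> kn P
      unfolding Fd_def pvec_def by simp
  qed
qed

lemma Zc_bump:
  assumes "k \<le> n" "\<And>i. i \<le> n \<Longrightarrow> g i > 0"
  shows "Zc n (bump g k) = g k / (\<Sum>i\<le>n. g i) * Zc n g"
proof -
  have nonp: "\<And>z::real. z > 0 \<Longrightarrow> z \<notin> \<int>\<^sub>\<le>\<^sub>0" by (auto dest!: nonpos_Ints_nonpos)
  have "(\<Prod>i\<le>n. Gamma (bump g k i)) = (\<Prod>i\<le>n. Gamma (g i) * (if i = k then g i else 1))"
  proof (rule prod.cong)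
    fix i assume "i \<in> {..n}"
    then have "g i > 0" using assms by auto
    then show "Gamma (bump g k i) = Gamma (g i) * (if i = k then g i else 1)"
      using Gamma_plus1[OF nonp[OF \<open>g i > 0\<close>]] by (auto simp: bump_def)
  qed simp
  also have "\<dots> = (\<Prod>i\<le>n. Gamma (g i)) * g k"
    using assms(1) by (simp add: prod.distrib prod.delta)
  finally have P: "(\<Prod>i\<le>n. Gamma (bump g k i)) = (\<Prod>i\<le>n. Gamma (g i)) * g k" .
  have S: "(\<Sum>i\<le>n. bump g k i) = (\<Sum>i\<le>n. g i) + 1"
    using assms(1) by (simp add: bump_def sum.distrib)
  have apos: "(\<Sum>i\<le>n. g i) > 0" using assms(2) by (intro sum_pos) auto
  have G: "Gamma ((\<Sum>i\<le>n. g i) + 1) = (\<Sum>i\<le>n. g i) * Gamma (\<Sum>i\<le>n. g i)"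
    by (rule Gamma_plus1[OF nonp[OF apos]])
  have "Gamma (\<Sum>i\<le>n. g i) > 0" using apos by simp
  then show ?thesis unfolding Zc_def P S G using apos by (simp add: field_simps)
qed

lemma dens_eq: "dirichlet_density (Suc n) \<gamma> x = Fd n \<gamma> 1 x / Zc n \<gamma>"
proof -
  have e: "(x \<in> open_simplex_coords (Suc n)) = ((\<forall>i\<in>{..<n}. 0 < x i) \<and> (\<Sum>i<n. x i) < 1)"
    by (auto simp: open_simplex_coords_def)
  show ?thesis
  proof (cases "(\<forall>i\<in>{..<n}. 0 < x i) \<and> (\<Sum>i<n. x i) < 1")
    case True
    then show ?thesis unfolding dirichlet_density_def e Fd_def Zc_def if_P[OF True]
      by (simp add: lessThan_Suc_atMost)
  next
    case False
    then show ?thesis unfolding dirichlet_density_def e Fd_def Zc_def if_not_P[OF False]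
      by simp
  qed
qed

lemma pvec_meas[measurable]: "(\<lambda>x. pvec (Suc n) x k) \<in> borel_measurable (PiM {..<n} (\<lambda>_. lborel))"
proof (cases "k < n")
  case True
  then have "(\<lambda>x. pvec (Suc n) x k) = (\<lambda>x. x k)" by (auto simp: pvec_def)
  then show ?thesis using True by simp
next
  case False
  then have "(\<lambda>x. pvec (Suc n) x k) = (\<lambda>x. 1 - (\<Sum>i<n. x i))" by (auto simp: pvec_def)
  then show ?thesis by simp
qed

lemma dir_hasint:
  assumes gp: "\<And>i. i \<le> n \<Longrightarrow> \<gamma> i > 0" and g2p: "\<And>i. i \<le> n \<Longrightarrow> g2 i > 0"
    and fm: "f \<in> borel_measurable (PiM {..<n} (\<lambda>_. lborel))"
    and fe: "\<And>x. Fd n \<gamma> 1 x * f x = Fd n g2 1 x"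
  shows "has_bochner_integral (dirichlet (Suc n) \<gamma>) f (Zc n g2 / Zc n \<gamma>)"
proof -
  let ?P = "PiM {..<n} (\<lambda>_. lborel)"
  have Zp: "Zc n \<gamma> > 0" "Zc n g2 > 0" using Zc_pos gp g2p by auto
  have dD: "dirichlet (Suc n) \<gamma> = density ?P (\<lambda>x. ennreal (Fd n \<gamma> 1 x / Zc n \<gamma>))"
    by (simp add: dirichlet_def dens_eq)
  have fnn: "f x \<ge> 0" if "Fd n \<gamma> 1 x > 0" for x
  proof -
    have "Fd n \<gamma> 1 x * f x \<ge> 0" using fe Fd_nonneg by metis
    then show ?thesis using that by (simp add: zero_le_mult_iff)
  qed
  show ?thesis unfolding dD
  proof (rule has_bochner_integral_nn_integral)
    show "f \<in> borel_measurable (density ?P (\<lambda>x. ennreal (Fd n \<gamma> 1 x / Zc n \<gamma>)))"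
      using fm by simp
    show "AE x in density ?P (\<lambda>x. ennreal (Fd n \<gamma> 1 x / Zc n \<gamma>)). 0 \<le> f x"
    proof (subst AE_density)
      show "(\<lambda>x. ennreal (Fd n \<gamma> 1 x / Zc n \<gamma>)) \<in> borel_measurable ?P" by measurable
      show "AE x in ?P. 0 < ennreal (Fd n \<gamma> 1 x / Zc n \<gamma>) \<longrightarrow> 0 \<le> f x"
      proof (rule AE_I2, rule impI)
        fix x assume "0 < ennreal (Fd n \<gamma> 1 x / Zc n \<gamma>)"
        then have "Fd n \<gamma> 1 x / Zc n \<gamma> > 0" by simp
        then have "Fd n \<gamma> 1 x > 0" using Zp by (simp add: zero_less_divide_iff)
        then show "0 \<le> f x" by (rule fnn)
      qed
    qed
    show "0 \<le> Zc n g2 / Zc n \<gamma>" using Zp by simp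
    have "(\<integral>\<^sup>+x. ennreal (f x) \<partial>density ?P (\<lambda>x. ennreal (Fd n \<gamma> 1 x / Zc n \<gamma>)))
        = (\<integral>\<^sup>+x. ennreal (Fd n \<gamma> 1 x / Zc n \<gamma>) * ennreal (f x) \<partial>?P)"
      using fm by (subst nn_integral_density) auto
    also have "\<dots> = (\<integral>\<^sup>+x. ennreal (1 / Zc n \<gamma>) * ennreal (Fd n g2 1 x) \<partial>?P)"
    proof (rule nn_integral_cong)
      fix x
      show "ennreal (Fd n \<gamma> 1 x / Zc n \<gamma>) * ennreal (f x) = ennreal (1 / Zc n \<gamma>) * ennreal (Fd n g2 1 x)"
      proof (cases "Fd n \<gamma> 1 x > 0")
        case True
        then have "f x \<ge> 0" by (rule fnn)
        then show ?thesis using True Zp fe[of x] Fd_nonneg[of n g2 1 x]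
          by (simp add: ennreal_mult[symmetric])
      next
        case False
        then have "Fd n \<gamma> 1 x = 0" using Fd_nonneg[of n \<gamma> 1 x] by simp
        then show ?thesis using fe[of x] by simp
      qed
    qed
    also have "\<dots> = ennreal (1 / Zc n \<gamma>) * ennreal (Zc n g2)"
      by (subst nn_integral_cmult) (auto simp: Fd_int1[OF g2p])
    also have "\<dots> = ennreal (Zc n g2 / Zc n \<gamma>)"
      using Zp by (simp add: ennreal_mult[symmetric])
    finally show "(\<integral>\<^sup>+x. ennreal (f x) \<partial>density ?P (\<lambda>x. ennreal (Fd n \<gamma> 1 x / Zc n \<gamma>))) = ennreal (Zc n g2 / Zc n \<gamma>)" .
  qed
qed

lemma sum_bump: "k \<le> n \<Longrightarrow> (\<Sum>i\<le>n. bump g k i) = (\<Sum>i\<le>n. g i) + 1"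
  by (simp add: bump_def sum.distrib)

lemma mom0:
  assumes gp: "\<And>i. i \<le> n \<Longrightarrow> \<gamma> i > 0"
  shows "has_bochner_integral (dirichlet (Suc n) \<gamma>) (\<lambda>x. 1) (1::real)"
proof -
  have zp: "Zc n \<gamma> > 0" by (intro Zc_pos gp)
  have "has_bochner_integral (dirichlet (Suc n) \<gamma>) (\<lambda>x. 1::real) (Zc n \<gamma> / Zc n \<gamma>)"
    by (rule dir_hasint[of n \<gamma> \<gamma>]) (auto intro: gp)
  then show ?thesis using zp by simp
qed

lemma mom1:
  assumes gp: "\<And>i. i \<le> n \<Longrightarrow> \<gamma> i > 0" and k: "k \<le> n"
  shows "has_bochner_integral (dirichlet (Suc n) \<gamma>) (\<lambda>x. pvec (Suc n) x k) (\<gamma> k / (\<Sum>i\<le>n. \<gamma> i))"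
proof -
  have zp: "Zc n \<gamma> > 0" by (intro Zc_pos gp)
  have "has_bochner_integral (dirichlet (Suc n) \<gamma>) (\<lambda>x. pvec (Suc n) x k) (Zc n (bump \<gamma> k) / Zc n \<gamma>)"
    by (rule dir_hasint[of n \<gamma> "bump \<gamma> k"]) (auto intro: gp bump_pos simp: Fd_bump[OF k])
  then show ?thesis using zp by (simp add: Zc_bump[OF k gp])
qed

lemma mom2:
  assumes gp: "\<And>i. i \<le> n \<Longrightarrow> \<gamma> i > 0" and k: "k \<le> n" and l: "l \<le> n"
  shows "has_bochner_integral (dirichlet (Suc n) \<gamma>) (\<lambda>x. pvec (Suc n) x k * pvec (Suc n) x l)
     (\<gamma> k * (\<gamma> l + (if l = k then 1 else 0)) / ((\<Sum>i\<le>n. \<gamma> i) * ((\<Sum>i\<le>n. \<gamma> i) + 1)))"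
proof -
  have zp: "Zc n \<gamma> > 0" by (intro Zc_pos gp)
  have g1: "\<And>i. i \<le> n \<Longrightarrow> bump \<gamma> k i > 0" by (rule bump_pos) (auto intro: gp)
  have g2: "\<And>i. i \<le> n \<Longrightarrow> bump (bump \<gamma> k) l i > 0" by (rule bump_pos) (auto intro: g1)
  have "has_bochner_integral (dirichlet (Suc n) \<gamma>) (\<lambda>x. pvec (Suc n) x k * pvec (Suc n) x l)
      (Zc n (bump (bump \<gamma> k) l) / Zc n \<gamma>)"
  proof (rule dir_hasint[of n \<gamma> "bump (bump \<gamma> k) l"])
    fix x
    show "Fd n \<gamma> 1 x * (pvec (Suc n) x k * pvec (Suc n) x l) = Fd n (bump (bump \<gamma> k) l) 1 x"
      by (simp add: Fd_bump[OF k, symmetric] Fd_bump[OF l, symmetric] mult.assoc)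
  qed (auto intro: gp g2)
  moreover have "Zc n (bump (bump \<gamma> k) l) = (\<gamma> l + (if l = k then 1 else 0)) / ((\<Sum>i\<le>n. \<gamma> i) + 1) * (\<gamma> k / (\<Sum>i\<le>n. \<gamma> i) * Zc n \<gamma>)"
    using Zc_bump[of l n "bump \<gamma> k"] Zc_bump[of k n \<gamma>] sum_bump[OF k, of \<gamma>] l k g1 gp
    by (simp add: bump_def)
  moreover have apos: "(\<Sum>i\<le>n. \<gamma> i) > 0" by (intro sum_pos gp) auto
  moreover have "\<And>c A Z. Z > 0 \<Longrightarrow> A > 0 \<Longrightarrow> (\<gamma> l + c) / (A + 1) * (\<gamma> k / A * Z) / Z = \<gamma> k * (\<gamma> l + c) / (A * (A + 1))"
    by (simp add: mult.commute)
  ultimately show ?thesis using zp by simp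
qed

lemma covalg: fixes \<alpha> A B N :: real assumes "\<alpha> > 0"
 shows "(A*B+N)/(\<alpha>*(\<alpha>+1)) - A/\<alpha>*(B/\<alpha>) - B/\<alpha>*(A/\<alpha>) + A/\<alpha>*(B/\<alpha>)*1 = (\<alpha>*N - A*B)/(\<alpha>^2*(\<alpha>+1))"
proof -
  have "(A*B+N)/(\<alpha>*(\<alpha>+1)) = \<alpha>*(A*B+N)/(\<alpha>^2*(\<alpha>+1))" using assms by (simp add: power2_eq_square)
  moreover have "A/\<alpha>*(B/\<alpha>) = (\<alpha>+1)*(A*B)/(\<alpha>^2*(\<alpha>+1))" using assms by (simp add: power2_eq_square)
  ultimately show ?thesis by (simp add: diff_divide_distrib[symmetric] add_divide_distrib[symmetric] algebra_simps)
qed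

lemma lin_mean:
  assumes gp: "\<And>i. i \<le> n \<Longrightarrow> \<gamma> i > 0"
  shows "has_bochner_integral (dirichlet (Suc n) \<gamma>) (\<lambda>x. \<Sum>k\<le>n. a k * pvec (Suc n) x k)
           ((\<Sum>k\<le>n. a k * \<gamma> k) / (\<Sum>i\<le>n. \<gamma> i))"
proof -
  have "has_bochner_integral (dirichlet (Suc n) \<gamma>) (\<lambda>x. \<Sum>k\<le>n. a k * pvec (Suc n) x k)
           (\<Sum>k\<le>n. a k * (\<gamma> k / (\<Sum>i\<le>n. \<gamma> i)))"
    by (intro has_bochner_integral_sum has_bochner_integral_mult_right mom1) (auto intro: gp)
  then show ?thesis by (simp add: sum_divide_distrib)
qed

lemma quad_mean:
  assumes gp: "\<And>i. i \<le> n \<Longrightarrow> \<gamma> i > 0"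
  shows "has_bochner_integral (dirichlet (Suc n) \<gamma>)
           (\<lambda>x. (\<Sum>k\<le>n. a k * pvec (Suc n) x k) * (\<Sum>l\<le>n. b l * pvec (Suc n) x l))
           (((\<Sum>k\<le>n. a k * \<gamma> k) * (\<Sum>l\<le>n. b l * \<gamma> l) + (\<Sum>k\<le>n. a k * b k * \<gamma> k))
             / ((\<Sum>i\<le>n. \<gamma> i) * ((\<Sum>i\<le>n. \<gamma> i) + 1)))"
proof -
  define D where "D = (\<Sum>i\<le>n. \<gamma> i) * ((\<Sum>i\<le>n. \<gamma> i) + 1)"
  have "has_bochner_integral (dirichlet (Suc n) \<gamma>)
           (\<lambda>x. \<Sum>k\<le>n. \<Sum>l\<le>n. (a k * b l) * (pvec (Suc n) x k * pvec (Suc n) x l))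
           (\<Sum>k\<le>n. \<Sum>l\<le>n. (a k * b l) * (\<gamma> k * (\<gamma> l + (if l = k then 1 else 0)) / D))"
    unfolding D_def
    by (intro has_bochner_integral_sum has_bochner_integral_mult_right mom2) (auto intro: gp)
  moreover have "(\<lambda>x. \<Sum>k\<le>n. \<Sum>l\<le>n. (a k * b l) * (pvec (Suc n) x k * pvec (Suc n) x l))
     = (\<lambda>x. (\<Sum>k\<le>n. a k * pvec (Suc n) x k) * (\<Sum>l\<le>n. b l * pvec (Suc n) x l))"
    by (simp add: sum_product mult_ac)
  moreover have "(\<Sum>k\<le>n. \<Sum>l\<le>n. (a k * b l) * (\<gamma> k * (\<gamma> l + (if l = k then 1 else 0)) / D))
     = ((\<Sum>k\<le>n. a k * \<gamma> k) * (\<Sum>l\<le>n. b l * \<gamma> l) + (\<Sum>k\<le>n. a k * b k * \<gamma> k)) / D"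
  proof -
    have "\<And>k. k \<le> n \<Longrightarrow> (\<Sum>l\<le>n. (a k * b l) * (\<gamma> k * (\<gamma> l + (if l = k then 1 else 0)) / D))
         = ((a k * \<gamma> k) * (\<Sum>l\<le>n. b l * \<gamma> l) + a k * b k * \<gamma> k) / D"
    proof -
      fix k assume k: "k \<le> n"
      have "(\<Sum>l\<le>n. (a k * b l) * (\<gamma> k * (\<gamma> l + (if l = k then 1 else 0)) / D))
          = (\<Sum>l\<le>n. ((a k * \<gamma> k) * (b l * \<gamma> l) + (if l = k then a k * b k * \<gamma> k else 0)) / D)"
        by (rule sum.cong) (auto simp: algebra_simps)
      also have "\<dots> = ((a k * \<gamma> k) * (\<Sum>l\<le>n. b l * \<gamma> l) + a k * b k * \<gamma> k) / D"
        using k by (simp add: sum_divide_distrib[symmetric] sum.distrib sum_distrib_left)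
      finally show "?thesis k" .
    qed
    then have "(\<Sum>k\<le>n. \<Sum>l\<le>n. (a k * b l) * (\<gamma> k * (\<gamma> l + (if l = k then 1 else 0)) / D))
       = (\<Sum>k\<le>n. ((a k * \<gamma> k) * (\<Sum>l\<le>n. b l * \<gamma> l) + a k * b k * \<gamma> k) / D)"
      by (intro sum.cong) auto
    also have "\<dots> = ((\<Sum>k\<le>n. a k * \<gamma> k) * (\<Sum>l\<le>n. b l * \<gamma> l) + (\<Sum>k\<le>n. a k * b k * \<gamma> k)) / D"
      by (simp add: sum_divide_distrib[symmetric] sum.distrib sum_distrib_right)
    finally show ?thesis .
  qed
  ultimately show ?thesis unfolding D_def by simp
qed

lemma cov_formula:
  fixes a b :: "nat \<Rightarrow> real"
  assumes gp: "\<And>i. i \<le> n \<Longrightarrow> \<gamma> i > 0"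
  defines "\<alpha> \<equiv> \<Sum>i\<le>n. \<gamma> i"
  defines "A \<equiv> \<Sum>k\<le>n. a k * \<gamma> k" and "B \<equiv> \<Sum>k\<le>n. b k * \<gamma> k" and "N \<equiv> \<Sum>k\<le>n. a k * b k * \<gamma> k"
  shows "has_bochner_integral (dirichlet (Suc n) \<gamma>)
           (\<lambda>x. ((\<Sum>k\<le>n. a k * pvec (Suc n) x k) - A / \<alpha>) * ((\<Sum>l\<le>n. b l * pvec (Suc n) x l) - B / \<alpha>))
           ((\<alpha> * N - A * B) / (\<alpha>^2 * (\<alpha> + 1)))"
proof -
  have apos: "\<alpha> > 0" unfolding \<alpha>_def by (intro sum_pos gp) auto
  let ?X = "\<lambda>x. \<Sum>k\<le>n. a k * pvec (Suc n) x k"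
  let ?Y = "\<lambda>x. \<Sum>l\<le>n. b l * pvec (Suc n) x l"
  have hX: "has_bochner_integral (dirichlet (Suc n) \<gamma>) ?X (A / \<alpha>)"
    unfolding A_def \<alpha>_def by (rule lin_mean[OF gp])
  have hY: "has_bochner_integral (dirichlet (Suc n) \<gamma>) ?Y (B / \<alpha>)"
    unfolding B_def \<alpha>_def by (rule lin_mean[OF gp])
  have hXY: "has_bochner_integral (dirichlet (Suc n) \<gamma>) (\<lambda>x. ?X x * ?Y x) ((A * B + N) / (\<alpha> * (\<alpha> + 1)))"
    unfolding A_def B_def N_def \<alpha>_def by (rule quad_mean[OF gp])
  have h1: "has_bochner_integral (dirichlet (Suc n) \<gamma>) (\<lambda>x. 1) (1::real)" by (rule mom0[OF gp])
  have "has_bochner_integral (dirichlet (Suc n) \<gamma>)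
     (\<lambda>x. ?X x * ?Y x - (A/\<alpha>) * ?Y x - (B/\<alpha>) * ?X x + (A/\<alpha>*(B/\<alpha>)) * 1)
     ((A * B + N) / (\<alpha> * (\<alpha> + 1)) - (A/\<alpha>) * (B/\<alpha>) - (B/\<alpha>) * (A/\<alpha>) + (A/\<alpha>*(B/\<alpha>)) * 1)"
    by (intro has_bochner_integral_add has_bochner_integral_diff has_bochner_integral_mult_right hX hY hXY h1)
  moreover have "(A * B + N) / (\<alpha> * (\<alpha> + 1)) - (A/\<alpha>) * (B/\<alpha>) - (B/\<alpha>) * (A/\<alpha>) + (A/\<alpha>*(B/\<alpha>)) * 1
      = (\<alpha> * N - A * B) / (\<alpha>^2 * (\<alpha> + 1))"
    by (rule covalg[OF apos])
  ultimately show ?thesis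
    by (simp add: algebra_simps)
qed

lemma corr_abcd:
  fixes a b c d \<nu> :: real
  assumes pos: "a > 0" "b > 0" "c > 0" "d > 0" and ab: "a^2 + b^2 = 1" and cd: "c^2 + d^2 = 1"
    and n0: "0 \<le> \<nu>" and n1: "\<nu> \<le> a^2" and n2: "\<nu> \<le> c^2" and n3: "a^2 + c^2 - 1 \<le> \<nu>"
  shows "max (- 1 / ((a/b) * (c/d))) (- ((a/b) * (c/d))) \<le> (\<nu> - a^2*c^2) / (a*b*(c*d))
       \<and> (\<nu> - a^2*c^2) / (a*b*(c*d)) \<le> min ((a/b) / (c/d)) ((c/d) / (a/b))"
proof -
  have P: "a*b*(c*d) > 0" using pos by simp
  have e1: "- 1 / ((a/b) * (c/d)) = (-(b^2*d^2)) / (a*b*(c*d))"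
    using pos by (simp add: field_simps power2_eq_square)
  have e2: "- ((a/b) * (c/d)) = (-(a^2*c^2)) / (a*b*(c*d))"
    using pos by (simp add: field_simps power2_eq_square)
  have e3: "(a/b) / (c/d) = (a^2*d^2) / (a*b*(c*d))"
    using pos by (simp add: field_simps power2_eq_square)
  have e4: "(c/d) / (a/b) = (c^2*b^2) / (a*b*(c*d))"
    using pos by (simp add: field_simps power2_eq_square)
  have b2: "b^2 = 1 - a^2" and d2: "d^2 = 1 - c^2" using ab cd by auto
  have i1: "-(b^2*d^2) \<le> \<nu> - a^2*c^2" unfolding b2 d2 using n3 by (simp add: algebra_simps)
  have i2: "-(a^2*c^2) \<le> \<nu> - a^2*c^2" using n0 by simp
  have i3: "\<nu> - a^2*c^2 \<le> a^2*d^2" unfolding d2 using n1 by (simp add: algebra_simps)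
  have i4: "\<nu> - a^2*c^2 \<le> c^2*b^2" unfolding b2 using n2 by (simp add: algebra_simps)
  have j1: "(-(b^2*d^2)) / (a*b*(c*d)) \<le> (\<nu> - a^2*c^2) / (a*b*(c*d))"
    using P i1 by (intro divide_right_mono) auto
  have j2: "(-(a^2*c^2)) / (a*b*(c*d)) \<le> (\<nu> - a^2*c^2) / (a*b*(c*d))"
    using P i2 by (intro divide_right_mono) auto
  have j3: "(\<nu> - a^2*c^2) / (a*b*(c*d)) \<le> (a^2*d^2) / (a*b*(c*d))"
    using P i3 by (intro divide_right_mono) auto
  have j4: "(\<nu> - a^2*c^2) / (a*b*(c*d)) \<le> (c^2*b^2) / (a*b*(c*d))"
    using P i4 by (intro divide_right_mono) auto
  show ?thesis unfolding e1 e2 e3 e4 using j1 j2 j3 j4 by linarith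
qed

lemma corr_bounds:
  fixes \<mu>1 \<mu>2 \<nu> c :: real
  assumes m1: "0 < \<mu>1" "\<mu>1 < 1" and m2: "0 < \<mu>2" "\<mu>2 < 1" and n0: "0 \<le> \<nu>" and n1: "\<nu> \<le> \<mu>1"
    and n2: "\<nu> \<le> \<mu>2" and n3: "\<mu>1 + \<mu>2 - 1 \<le> \<nu>" and cp: "c > 0"
  shows "max (- 1 / (sqrt (\<mu>1/(1-\<mu>1)) * sqrt (\<mu>2/(1-\<mu>2)))) (- (sqrt (\<mu>1/(1-\<mu>1)) * sqrt (\<mu>2/(1-\<mu>2))))
           \<le> (c*(\<nu> - \<mu>1*\<mu>2)) / (sqrt (c*(\<mu>1 - \<mu>1*\<mu>1)) * sqrt (c*(\<mu>2 - \<mu>2*\<mu>2)))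
       \<and> (c*(\<nu> - \<mu>1*\<mu>2)) / (sqrt (c*(\<mu>1 - \<mu>1*\<mu>1)) * sqrt (c*(\<mu>2 - \<mu>2*\<mu>2)))
           \<le> min (sqrt (\<mu>1/(1-\<mu>1)) / sqrt (\<mu>2/(1-\<mu>2))) (sqrt (\<mu>2/(1-\<mu>2)) / sqrt (\<mu>1/(1-\<mu>1)))"
proof -
  define a b c' d e where "a = sqrt \<mu>1" "b = sqrt (1-\<mu>1)" "c' = sqrt \<mu>2" "d = sqrt (1-\<mu>2)" "e = sqrt c"
  have pos: "a > 0" "b > 0" "c' > 0" "d > 0" "e > 0" using m1 m2 cp by (auto simp: a_b_c'_d_e_def)
  have sq: "a^2 = \<mu>1" "b^2 = 1-\<mu>1" "c'^2 = \<mu>2" "d^2 = 1-\<mu>2" "e^2 = c"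
    using m1 m2 cp by (auto simp: a_b_c'_d_e_def)
  have psi1: "sqrt (\<mu>1/(1-\<mu>1)) = a/b" by (simp add: a_b_c'_d_e_def real_sqrt_divide)
  have psi2: "sqrt (\<mu>2/(1-\<mu>2)) = c'/d" by (simp add: a_b_c'_d_e_def real_sqrt_divide)
  have s1: "sqrt (c*(\<mu>1 - \<mu>1*\<mu>1)) = e*(a*b)"
  proof -
    have "c*(\<mu>1 - \<mu>1*\<mu>1) = c * (\<mu>1 * (1-\<mu>1))" by (simp add: algebra_simps)
    then show ?thesis unfolding a_b_c'_d_e_def by (simp only: real_sqrt_mult)
  qed
  have s2: "sqrt (c*(\<mu>2 - \<mu>2*\<mu>2)) = e*(c'*d)"
  proof -
    have "c*(\<mu>2 - \<mu>2*\<mu>2) = c * (\<mu>2 * (1-\<mu>2))" by (simp add: algebra_simps)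
    then show ?thesis unfolding a_b_c'_d_e_def by (simp only: real_sqrt_mult)
  qed
  have rho: "(c*(\<nu> - \<mu>1*\<mu>2)) / (sqrt (c*(\<mu>1 - \<mu>1*\<mu>1)) * sqrt (c*(\<mu>2 - \<mu>2*\<mu>2)))
       = (\<nu> - a^2*c'^2) / (a*b*(c'*d))"
  proof -
    have h: "e*(a*b) * (e*(c'*d)) = c * (a*b*(c'*d))" using sq(5) by (simp add: power2_eq_square mult_ac)
    show ?thesis unfolding s1 s2 h using cp sq by simp
  qed
  have "a^2 + b^2 = 1" "c'^2 + d^2 = 1" using sq by auto
  then show ?thesis unfolding psi1 psi2 rho
    using corr_abcd[of a b c' d \<nu>] pos n0 n1 n2 n3 sq by simp
qed

lemma Hmat_01: "Hmat m j k = 0 \<or> Hmat m j k = 1"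
  unfolding Hmat_def by (cases "even (k div 2^(m-1-j))") (auto simp: odd_iff_mod_2_eq_one)

lemma Hmat_nonneg: "Hmat m j k \<ge> 0" by (simp add: Hmat_def)

lemma Hmat_cases: "(Hmat m j k = 0 \<Longrightarrow> P) \<Longrightarrow> (Hmat m j k = 1 \<Longrightarrow> P) \<Longrightarrow> P"
  using Hmat_01[of m j k] by blast

lemma Hmat_last: assumes "j < m" shows "Hmat m j (2^m - 1) = 1"
proof -
  have mk: "(2::nat)^m - 1 = mask m" by (simp add: mask_eq_exp_minus_1)
  have "bit (mask m :: nat) (m-1-j)" using assms by (simp add: bit_mask_iff)
  then have "bit ((2::nat)^m - 1) (m-1-j)" by (simp only: mk)
  then have "odd ((2^m - 1) div 2^(m-1-j) :: nat)" by (simp add: bit_iff_odd)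
  then show ?thesis unfolding Hmat_def by (simp add: odd_iff_mod_2_eq_one)
qed

theorem mainTheorem7:
  fixes m :: nat and \<gamma> :: "nat \<Rightarrow> real" and j j' :: nat
  assumes "m \<ge> 2"
    and "\<And>i. i < 2^m \<Longrightarrow> \<gamma> i > 0"
    and "j < m" and "j' < m" and "j \<noteq> j'"
  defines "\<psi> \<equiv> \<lambda>k. sqrt (mbeta_mean m \<gamma> k / (1 - mbeta_mean m \<gamma> k))"
  shows "max (- 1 / (\<psi> j * \<psi> j')) (- (\<psi> j * \<psi> j')) \<le> mbeta_corr m \<gamma> j j'
       \<and> mbeta_corr m \<gamma> j j' \<le> min (\<psi> j / \<psi> j') (\<psi> j' / \<psi> j)"
proof -
  obtain n where n: "2^m = Suc n" using not0_implies_Suc[of "2^m"] by auto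
  have gp: "\<And>i. i \<le> n \<Longrightarrow> \<gamma> i > 0" using assms(2) n by auto
  define \<alpha> where "\<alpha> = (\<Sum>i\<le>n. \<gamma> i)"
  have apos: "\<alpha> > 0" unfolding \<alpha>_def by (intro sum_pos gp) auto
  have th: "\<And>x i. theta m x i = (\<Sum>k\<le>n. Hmat m i k * pvec (Suc n) x k)"
    by (simp add: theta_def n lessThan_Suc_atMost)
  have mean: "\<And>i. mbeta_mean m \<gamma> i = (\<Sum>k\<le>n. Hmat m i k * \<gamma> k) / \<alpha>"
    unfolding mbeta_mean_def th n \<alpha>_def by (rule has_bochner_integral_integral_eq[OF lin_mean[OF gp]])
  have cov: "\<And>i i'. mbeta_cov m \<gamma> i i' = (\<alpha> * (\<Sum>k\<le>n. Hmat m i k * Hmat m i' k * \<gamma> k)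
       - (\<Sum>k\<le>n. Hmat m i k * \<gamma> k) * (\<Sum>k\<le>n. Hmat m i' k * \<gamma> k)) / (\<alpha>^2*(\<alpha>+1))"
  proof -
    fix i i'
    show "?thesis i i'"
      unfolding mbeta_cov_def mean th n \<alpha>_def
      by (rule has_bochner_integral_integral_eq[OF cov_formula[OF gp, where a="Hmat m i" and b="Hmat m i'"]])
  qed
  define A where "A = (\<Sum>k\<le>n. Hmat m j k * \<gamma> k)"
  define B where "B = (\<Sum>k\<le>n. Hmat m j' k * \<gamma> k)"
  define N where "N = (\<Sum>k\<le>n. Hmat m j k * Hmat m j' k * \<gamma> k)"
  have sq: "(\<Sum>k\<le>n. Hmat m i k * Hmat m i k * \<gamma> k) = (\<Sum>k\<le>n. Hmat m i k * \<gamma> k)" for i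
    apply (rule sum.cong, simp)
    subgoal for k by (cases rule: Hmat_cases[of m i k]) auto
    done
  have nlast: "n = 2^m - 1" using n by simp
  have Apos: "A > 0" and Blt: "B > 0"
  proof -
    have "\<And>i. i < m \<Longrightarrow> (\<Sum>k\<le>n. Hmat m i k * \<gamma> k) \<ge> Hmat m i n * \<gamma> n"
      by (rule member_le_sum) (auto intro!: mult_nonneg_nonneg Hmat_nonneg less_imp_le[OF gp])
    moreover have "\<And>i. i < m \<Longrightarrow> Hmat m i n * \<gamma> n > 0"
      using Hmat_last gp nlast by auto
    ultimately show "A > 0" "B > 0" unfolding A_def B_def using assms(3,4) by (meson less_le_trans)+
  qed
  have Alt: "A < \<alpha>" and Blt2: "B < \<alpha>"
  proof -
    have "\<And>i. \<alpha> - (\<Sum>k\<le>n. Hmat m i k * \<gamma> k) = (\<Sum>k\<le>n. (1 - Hmat m i k) * \<gamma> k)"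
      unfolding \<alpha>_def by (simp add: sum_subtractf[symmetric] algebra_simps)
    moreover have "(\<Sum>k\<le>n. (1 - Hmat m i k) * \<gamma> k) \<ge> (1 - Hmat m i 0) * \<gamma> 0" for i
      apply (rule member_le_sum)
        apply simp
      subgoal for k using gp[of k] by (cases rule: Hmat_cases[of m i k]) auto
      by simp
    moreover have "\<And>i. (1 - Hmat m i 0) * \<gamma> 0 > 0" using gp by (simp add: Hmat_def)
    ultimately have "\<And>i. (\<Sum>k\<le>n. Hmat m i k * \<gamma> k) < \<alpha>"
      by (metis diff_gt_0_iff_gt less_le_trans)
    then show "A < \<alpha>" "B < \<alpha>" unfolding A_def B_def by auto
  qed
  have N0: "N \<ge> 0" unfolding N_def

      apply (rule sum_nonneg)
      subgoal for k using gp[of k] by (cases rule: Hmat_cases[of m j k]; cases rule: Hmat_cases[of m j' k]) auto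
      done
  have NA: "N \<le> A" unfolding N_def A_def

      apply (rule sum_mono)
      subgoal for k using gp[of k] by (cases rule: Hmat_cases[of m j k]; cases rule: Hmat_cases[of m j' k]) auto
      done
  have NB: "N \<le> B" unfolding N_def B_def

      apply (rule sum_mono)
      subgoal for k using gp[of k] by (cases rule: Hmat_cases[of m j k]; cases rule: Hmat_cases[of m j' k]) auto
      done
  have NAB: "A + B - \<alpha> \<le> N"
  proof -
    have "A + B - N = (\<Sum>k\<le>n. (Hmat m j k + Hmat m j' k - Hmat m j k * Hmat m j' k) * \<gamma> k)"
      unfolding A_def B_def N_def by (simp only: sum_subtractf sum.distrib distrib_right left_diff_distrib)
    also have "\<dots> \<le> \<alpha>" unfolding \<alpha>_def

      apply (rule sum_mono)
      subgoal for k using gp[of k] by (cases rule: Hmat_cases[of m j k]; cases rule: Hmat_cases[of m j' k]) auto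
      done
    finally show ?thesis by simp
  qed
  define c where "c = 1 / (\<alpha> + 1)"
  have cp: "c > 0" using apos by (simp add: c_def)
  have m1: "mbeta_mean m \<gamma> j = A/\<alpha>" "mbeta_mean m \<gamma> j' = B/\<alpha>" by (simp_all add: mean A_def B_def)
  have cjj': "mbeta_cov m \<gamma> j j' = c * (N/\<alpha> - A/\<alpha> * (B/\<alpha>))"
    unfolding cov A_def[symmetric] B_def[symmetric] N_def[symmetric] c_def
    using apos by (simp add: field_simps power2_eq_square)
  have cjj: "mbeta_cov m \<gamma> j j = c * (A/\<alpha> - A/\<alpha> * (A/\<alpha>))"
    unfolding cov sq A_def[symmetric] c_def
    using apos by (simp add: field_simps power2_eq_square)
  have cj'j': "mbeta_cov m \<gamma> j' j' = c * (B/\<alpha> - B/\<alpha> * (B/\<alpha>))"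
    unfolding cov sq B_def[symmetric] c_def
    using apos by (simp add: field_simps power2_eq_square)
  have "0 < A/\<alpha>" "A/\<alpha> < 1" "0 < B/\<alpha>" "B/\<alpha> < 1" "0 \<le> N/\<alpha>" "N/\<alpha> \<le> A/\<alpha>" "N/\<alpha> \<le> B/\<alpha>"
    using apos Apos Blt Alt Blt2 N0 NA NB NAB
    by (auto simp: field_simps divide_right_mono)
  moreover have "A/\<alpha> + B/\<alpha> - 1 \<le> N/\<alpha>"
  proof -
    have "(A + B - \<alpha>)/\<alpha> \<le> N/\<alpha>" using NAB apos by (intro divide_right_mono) auto
    moreover have "(A + B - \<alpha>)/\<alpha> = A/\<alpha> + B/\<alpha> - 1" using apos by (simp add: diff_divide_distrib add_divide_distrib)
    ultimately show ?thesis by simp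
  qed
  ultimately have "max (- 1 / (sqrt ((A/\<alpha>)/(1-A/\<alpha>)) * sqrt ((B/\<alpha>)/(1-B/\<alpha>)))) (- (sqrt ((A/\<alpha>)/(1-A/\<alpha>)) * sqrt ((B/\<alpha>)/(1-B/\<alpha>))))
           \<le> (c*(N/\<alpha> - A/\<alpha>*(B/\<alpha>))) / (sqrt (c*(A/\<alpha> - A/\<alpha>*(A/\<alpha>))) * sqrt (c*(B/\<alpha> - B/\<alpha>*(B/\<alpha>))))
       \<and> (c*(N/\<alpha> - A/\<alpha>*(B/\<alpha>))) / (sqrt (c*(A/\<alpha> - A/\<alpha>*(A/\<alpha>))) * sqrt (c*(B/\<alpha> - B/\<alpha>*(B/\<alpha>))))
           \<le> min (sqrt ((A/\<alpha>)/(1-A/\<alpha>)) / sqrt ((B/\<alpha>)/(1-B/\<alpha>))) (sqrt ((B/\<alpha>)/(1-B/\<alpha>)) / sqrt ((A/\<alpha>)/(1-A/\<alpha>)))"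
    by (intro corr_bounds cp)
  then show ?thesis
    unfolding \<psi>_def mbeta_corr_def cjj' cjj cj'j' m1 by simp
qed

end
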